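(* Let $n$ be such that $n$ or $1/n$ is a positive integer, let $\Delta_n=\mathrm{diag}(n,\frac1n,1,\dots,1)\in\mathcal{M}_{2g}(\mathbb{Q})$, and let $V$, $W$ be Seifert matrices with $W=\Delta_nV\Delta_n$. Then there are enlargements $\tilde V$ of $V$ and $\tilde W$ of $W$ with $\tilde W=P\tilde VP^t$ for some integral symplectic matrix $P$. Furthermore, if $(M,K,\Sigma,\underline f,V)$ and $(M',K',\Sigma',\underline f',W)$ are $\mathbb{Q}$SK-systems, then $W$ can be obtained from $V$ by a sequence of one enlargement, one integral symplectic congruence and one reduction, which induces the same $\tau$-class of isomorphisms $\mathcal{A}(K)\to\mathcal{A}(K')$ as the congruence $W=\Delta_nV\Delta_n$.
   Context: $J$: $2g\times2g$ block-diagonal with blocks $\begin{pmatrix}0&-1\\1&0\end{pmatrix}$. Seifert matrix: $V\in\mathcal{M}_{2g}(\mathbb{Q})$ with $V-V^t=J$ (note $\Delta_n$ is symplectic). $P$ symplectic: $PJP^t=J$. Row enlargement of $V$: $\begin{pmatrix}0&0&0\\1&x&\rho^t\\0&\rho&V\end{pmatrix}$; column enlargement: $\begin{pmatrix}0&-1&0\\0&x&\rho^t\\0&\rho&V\end{pmatrix}$ ($x\in\mathbb{Q}$, $\rho\in\mathbb{Q}^{2g}$); $V$ is a reduction of these. $\mathbb{Q}$SK-system $(M,K,\Sigma,\underline f,V)$: a rational homology 3-sphere $M$, knot $K$ trivial in $H_1(M;\mathbb{Z})$, Seifert surface $\Sigma$ of genus $g$, basis $(f_i)$ of $H_1(\Sigma;\mathbb{Z})$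 with intersection matrix $-J$, $V_{ij}=lk(f_i,f_j^+)$. $\mathcal{A}(K)=H_1(\tilde X;\mathbb{Q})$ for the infinite cyclic covering $\tilde X$ of the exterior, $t$ acting by a deck generator. Associated generators $(b_i)$: lifts of meridians of the $f_i$, generating $\mathcal{A}(K)$ with relations $\sum_i(tV-V^t)_{ij}b_i$, defined up to a common factor $t^k$. Induced $\tau$-class (the $\tau$-class of $\xi$ is $\{\xi\circ m_k\}$, $m_k$ multiplication by $t^k$): for a congruence $V'=PVP^t$, the class of $b_i\mapsto\sum_kP_{ki}b'_k$; for an enlargement, the class of $b_i\mapsto b'_{i+2}$ (generators of the enlarged matrix indexed $1,\dots,2g+2$); reductions give inverses; sequences give compositions. Here the intermediate enlarged matrices define modules by the same presentation. *)

theory Defs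
  imports "HOL-Computational_Algebra.Polynomial"
begin

text \<open>Matrices are functions nat => nat => rat, indices 0-based; an m x m matrix
  is supported on {0..<m} x {0..<m}.\<close>

type_synonym qmat = "nat \<Rightarrow> nat \<Rightarrow> rat"

definition supported :: "nat \<Rightarrow> qmat \<Rightarrow> bool" where
  "supported m A \<longleftrightarrow> (\<forall>i j. \<not> (i < m \<and> j < m) \<longrightarrow> A i j = 0)"

definition mmul :: "nat \<Rightarrow> qmat \<Rightarrow> qmat \<Rightarrow> qmat" where
  "mmul m A B = (\<lambda>i j. \<Sum>k<m. A i k * B k j)"

definition mtrans :: "qmat \<Rightarrow> qmat" where
  "mtrans A = (\<lambda>i j. A j i)"

definition Jmat :: "nat \<Rightarrow> qmat" where
  "Jmat g = (\<lambda>i j. if i < 2*g \<and> j < 2*g then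
       (if even i \<and> j = i + 1 then -1 else if odd i \<and> i = j + 1 then 1 else 0) else 0)"

definition seifert_matrix :: "nat \<Rightarrow> qmat \<Rightarrow> bool" where
  "seifert_matrix g V \<longleftrightarrow> supported (2*g) V \<and>
     (\<forall>i<2*g. \<forall>j<2*g. V i j - V j i = Jmat g i j)"

definition integral_symplectic :: "nat \<Rightarrow> qmat \<Rightarrow> bool" where
  "integral_symplectic g P \<longleftrightarrow> supported (2*g) P \<and> (\<forall>i j. P i j \<in> \<int>) \<and>
     mmul (2*g) (mmul (2*g) P (Jmat g)) (mtrans P) = Jmat g"

definition Delta :: "nat \<Rightarrow> rat \<Rightarrow> qmat" where
  "Delta g n = (\<lambda>i j. if i = j \<and> i < 2*g then
       (if i = 0 then n else if i = 1 then 1 / n else 1) else 0)"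

text \<open>Row enlargement ((0,0,0),(1,x,rho^t),(0,rho,V)) and column enlargement
  ((0,-1,0),(0,x,rho^t),(0,rho,V)) of a 2g x 2g matrix V; the generators of the
  enlarged matrix are indexed 0,...,2g+1, the old ones becoming i+2.\<close>
definition row_enl :: "nat \<Rightarrow> qmat \<Rightarrow> rat \<Rightarrow> (nat \<Rightarrow> rat) \<Rightarrow> qmat" where
  "row_enl g V x \<rho> = (\<lambda>i j. if i < 2*g+2 \<and> j < 2*g+2 then
      (if i = 0 then 0
       else if i = 1 then (if j = 0 then 1 else if j = 1 then x else \<rho> (j-2))
       else (if j = 0 then 0 else if j = 1 then \<rho> (i-2) else V (i-2) (j-2)))
     else 0)"

definition col_enl :: "nat \<Rightarrow> qmat \<Rightarrow> rat \<Rightarrow> (nat \<Rightarrow> rat) \<Rightarrow> qmat" where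
  "col_enl g V x \<rho> = (\<lambda>i j. if i < 2*g+2 \<and> j < 2*g+2 then
      (if i = 0 then (if j = 1 then -1 else 0)
       else if i = 1 then (if j = 0 then 0 else if j = 1 then x else \<rho> (j-2))
       else (if j = 0 then 0 else if j = 1 then \<rho> (i-2) else V (i-2) (j-2)))
     else 0)"

definition is_enlargement :: "nat \<Rightarrow> qmat \<Rightarrow> qmat \<Rightarrow> bool" where
  "is_enlargement g V V' \<longleftrightarrow> (\<exists>x \<rho>. V' = row_enl g V x \<rho> \<or> V' = col_enl g V x \<rho>)"

text \<open>An element of the free module on generators b_0..b_(m-1) is a coefficient vector
  nat => rat poly.  Laurent coefficients are handled by allowing multiplication by powers
  of t: two vectors are equal in the module presented by V (of size m) iff t^N times their
  difference lies in the Q[t]-span of the relation vectors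
  r_j = sum_i (tV - V^t)_(ij) b_i, j < m.\<close>

type_synonym lvec = "nat \<Rightarrow> rat poly"
type_synonym gmap = "nat \<Rightarrow> lvec"  \<comment> \<open>image of each generator b_i\<close>

definition rel_coeff :: "qmat \<Rightarrow> nat \<Rightarrow> nat \<Rightarrow> rat poly" where
  "rel_coeff V j i = [: - V j i, V i j :]"   \<comment> \<open>(tV - V^t)_(ij)\<close>

definition mod_eq :: "nat \<Rightarrow> qmat \<Rightarrow> lvec \<Rightarrow> lvec \<Rightarrow> bool" where
  "mod_eq m V v w \<longleftrightarrow> (\<exists>N c. \<forall>i<m.
      monom 1 N * (v i - w i) = (\<Sum>j<m. c j * rel_coeff V j i))"

definition comp_map :: "nat \<Rightarrow> gmap \<Rightarrow> gmap \<Rightarrow> gmap" where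
  "comp_map mid \<psi> \<xi> = (\<lambda>i k. \<Sum>j<mid. \<xi> i j * \<psi> j k)"   \<comment> \<open>psi after xi\<close>

definition id_map :: gmap where
  "id_map = (\<lambda>i k. if k = i then 1 else 0)"

definition cong_map :: "nat \<Rightarrow> qmat \<Rightarrow> gmap" where
  "cong_map m P = (\<lambda>i k. if k < m then [: P k i :] else 0)"  \<comment> \<open>b_i |-> sum_k P_(ki) b'_k\<close>

definition enl_map :: gmap where
  "enl_map = (\<lambda>i k. if k = i + 2 then 1 else 0)"

definition well_defined_map :: "nat \<Rightarrow> qmat \<Rightarrow> nat \<Rightarrow> qmat \<Rightarrow> gmap \<Rightarrow> bool" where
  "well_defined_map m V m' W \<phi> \<longleftrightarrow>
     (\<forall>j<m. mod_eq m' W (\<lambda>k. \<Sum>i<m. rel_coeff V j i * \<phi> i k) (\<lambda>_. 0))"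

definition map_eq :: "nat \<Rightarrow> nat \<Rightarrow> qmat \<Rightarrow> gmap \<Rightarrow> gmap \<Rightarrow> bool" where
  "map_eq m m' W \<xi> \<eta> \<longleftrightarrow> (\<forall>i<m. mod_eq m' W (\<xi> i) (\<eta> i))"

text \<open>Same tau-class: eta = xi o m_k for some integer k (m_k multiplication by t^k),
  expressed as t^a xi = t^b eta with a, b natural.\<close>
definition same_tau_class :: "nat \<Rightarrow> nat \<Rightarrow> qmat \<Rightarrow> gmap \<Rightarrow> gmap \<Rightarrow> bool" where
  "same_tau_class m m' W \<xi> \<eta> \<longleftrightarrow> (\<exists>a b. \<forall>i<m.
      mod_eq m' W (\<lambda>k. monom 1 a * \<xi> i k) (\<lambda>k. monom 1 b * \<eta> i k))"

end

theory Submission imports Defs begin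

lemma sum_split2: "(\<Sum>i<Suc (Suc m). f i) = f 0 + f 1 + (\<Sum>i<m. f (i+2))"
  by (simp add: sum.lessThan_Suc_shift add.assoc del: sum.lessThan_Suc) 

definition dd :: "rat \<Rightarrow> nat \<Rightarrow> rat" where
  "dd n i = (if i = 0 then n else if i = 1 then 1/n else 1)"

lemma Wdelta:
  assumes "W = mmul (2*g) (mmul (2*g) (Delta g n) V) (Delta g n)"
  shows "W i j = (if i < 2*g \<and> j < 2*g then dd n i * V i j * dd n j else 0)"
proof -
  have 1: "mmul (2*g) (Delta g n) V i l = (if i < 2*g then dd n i * V i l else 0)" for i l
  proof -
    have "Delta g n i k * V k l = (if k = i then (if i<2*g then dd n i * V i l else 0) else 0)" for k
      by (simp add: Delta_def dd_def)
    then show ?thesis unfolding mmul_def by (simp add: sum.delta')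
  qed
  have 2: "mmul (2*g) (Delta g n) V i l * Delta g n l j = (if l = j then (if i < 2*g \<and> j < 2*g then dd n i * V i j * dd n j else 0) else 0)" for l
    unfolding 1 by (simp add: Delta_def dd_def)
  have "W i j = (\<Sum>l<2*g. mmul (2*g) (Delta g n) V i l * Delta g n l j)"
    using assms by (simp add: mmul_def)
  also have "\<dots> = (if i < 2*g \<and> j < 2*g then dd n i * V i j * dd n j else 0)"
    unfolding 2 by (simp add: sum.delta)
  finally show ?thesis .
qed

definition blkP :: "nat \<Rightarrow> (nat \<Rightarrow> nat \<Rightarrow> rat) \<Rightarrow> qmat" where
  "blkP g B = (\<lambda>i j. if i < 4 \<and> j < 4 then B i j else if i = j \<and> i < 2*g+2 then 1 else 0)"

lemma sum_restr4:
  assumes "1 \<le> g"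
  shows "(\<Sum>k<2*g+2. if k < 4 then f k else 0) = (\<Sum>k<4. (f::nat\<Rightarrow>rat) k)"
proof -
  have "(\<Sum>k<2*g+2. if k < 4 then f k else 0) = (\<Sum>k\<in>{..<2*g+2} \<inter> {k. k<4}. f k)"
    using sum.inter_restrict[of "{..<2*g+2}" f "{k. k<4}"] by (simp del: sum.lessThan_Suc)
  also have "{..<2*g+2} \<inter> {k. k<4} = {..<(4::nat)}" using assms by auto
  finally show ?thesis .
qed

lemma blk_left:
  assumes "1 \<le> g" "i < 2*g+2"
  shows "mmul (2*g+2) (blkP g B) X i j = (if i<4 then (\<Sum>k<4. B i k * X k j) else X i j)"
proof (cases "i < 4")
  case True
  have "blkP g B i k * X k j = (if k < 4 then B i k * X k j else 0)" for k
    using True by (auto simp: blkP_def)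
  then have "mmul (2*g+2) (blkP g B) X i j = (\<Sum>k<2*g+2. if k < 4 then B i k * X k j else 0)"
    unfolding mmul_def by (rule sum.cong[OF refl])
  then show ?thesis using True sum_restr4[OF assms(1)] by (simp del: sum.lessThan_Suc)
next
  case False
  have "blkP g B i k * X k j = (if k = i then X i j else 0)" for k
    using False assms by (auto simp: blkP_def)
  then show ?thesis using False assms by (simp add: mmul_def)
qed

lemma blk_right:
  assumes "1 \<le> g" "j < 2*g+2"
  shows "mmul (2*g+2) X (mtrans (blkP g B)) i j = (if j<4 then (\<Sum>k<4. X i k * B j k) else X i j)"
proof (cases "j < 4")
  case True
  have "X i k * mtrans (blkP g B) k j = (if k < 4 then X i k * B j k else 0)" for k
    using True by (auto simp: blkP_def mtrans_def)
  then have "mmul (2*g+2) X (mtrans (blkP g B)) i j = (\<Sum>k<2*g+2. if k < 4 then X i k * B j k else 0)"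
    unfolding mmul_def by (rule sum.cong[OF refl])
  then show ?thesis using True sum_restr4[OF assms(1)] by (simp del: sum.lessThan_Suc)
next
  case False
  have "X i k * mtrans (blkP g B) k j = (if k = j then X i j else 0)" for k
    using False assms by (auto simp: blkP_def mtrans_def)
  then show ?thesis using False assms by (simp add: mmul_def)
qed

lemma blk_outl: "1 \<le> g \<Longrightarrow> \<not> i < 2*g+2 \<Longrightarrow> mmul (2*g+2) (blkP g B) X i j = 0"
  by (simp add: mmul_def blkP_def)
lemma blk_outr: "1 \<le> g \<Longrightarrow> \<not> j < 2*g+2 \<Longrightarrow> mmul (2*g+2) X (mtrans (blkP g B)) i j = 0"
  by (simp add: mmul_def blkP_def mtrans_def)

lemma conj_eq:
  assumes g: "1 \<le> g"
   and h1: "\<forall>i<4. \<forall>j<4. (\<Sum>l<4. (\<Sum>k<4. B i k * X k l) * B j l) = Y i j"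
   and h2: "\<forall>i<4. \<forall>c. 2 \<le> c \<longrightarrow> c < 2*g \<longrightarrow> (\<Sum>k<4. B i k * X k (c+2)) = Y i (c+2)"
   and h3: "\<forall>c. 2 \<le> c \<longrightarrow> c < 2*g \<longrightarrow> (\<forall>j<4. (\<Sum>k<4. X (c+2) k * B j k) = Y (c+2) j)"
   and h4: "\<forall>c d. 2 \<le> c \<longrightarrow> c < 2*g \<longrightarrow> 2 \<le> d \<longrightarrow> d < 2*g \<longrightarrow> X (c+2) (d+2) = Y (c+2) (d+2)"
   and h5: "\<forall>i j. \<not> (i < 2*g+2 \<and> j < 2*g+2) \<longrightarrow> Y i j = 0"
  shows "mmul (2*g+2) (mmul (2*g+2) (blkP g B) X) (mtrans (blkP g B)) = Y"
proof (intro ext)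
  fix i j
  show "mmul (2*g+2) (mmul (2*g+2) (blkP g B) X) (mtrans (blkP g B)) i j = Y i j"
  proof (cases "i < 2*g+2 \<and> j < 2*g+2")
    case False
    then show ?thesis using h5 blk_outr[OF g, of j] blk_outl[OF g] by (cases "j < 2*g+2") (auto simp: mmul_def)
  next
    case True
    then have i: "i < 2*g+2" and j: "j < 2*g+2" by auto
    have L: "mmul (2*g+2) (blkP g B) X i l = (if i<4 then (\<Sum>k<4. B i k * X k l) else X i l)" if "l < 2*g+2" for l
      using blk_left[OF g i] .
    have l4: "l < 4 \<Longrightarrow> l < 2*g+2" for l using g by simp
    show ?thesis
    proof (cases "j < 4")
      case jT: True
      then have e: "mmul (2*g+2) (mmul (2*g+2) (blkP g B) X) (mtrans (blkP g B)) i j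
          = (\<Sum>l<4. mmul (2*g+2) (blkP g B) X i l * B j l)" using blk_right[OF g j] by simp
      show ?thesis
      proof (cases "i < 4")
        case True
        then show ?thesis unfolding e using h1 jT L l4 by simp
      next
        case False
        then obtain c where c: "i = c+2" "2 \<le> c" "c < 2*g" using i by (intro that[of "i-2"]) auto
        then show ?thesis unfolding e using h3 jT L l4 False by simp
      qed
    next
      case jF: False
      then obtain d where d: "j = d+2" "2 \<le> d" "d < 2*g" using j by (intro that[of "j-2"]) auto
      have e: "mmul (2*g+2) (mmul (2*g+2) (blkP g B) X) (mtrans (blkP g B)) i j
          = mmul (2*g+2) (blkP g B) X i j" using blk_right[OF g j] jF by simp
      show ?thesis
      proof (cases "i < 4")
        case True
        then show ?thesis unfolding e using h2 d L j by simp
      next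
        case False
        then obtain c where c: "i = c+2" "2 \<le> c" "c < 2*g" using i by (intro that[of "i-2"]) auto
        then show ?thesis unfolding e using h4 d L j False by simp
      qed
    qed
  qed
qed

lemma sum4: "(\<Sum>k<(4::nat). f k) = f 0 + f 1 + f 2 + f 3"
  by (simp add: eval_nat_numeral)

lemma all4: "(\<forall>i<(4::nat). P i) = (P 0 \<and> P 1 \<and> P 2 \<and> P 3)"
  by (auto simp: eval_nat_numeral less_Suc_eq)

lemma seif:
  assumes "seifert_matrix g V" "1 \<le> g"
  shows "V 1 0 = V 0 1 + 1" "\<And>c. 2 \<le> c \<Longrightarrow> c < 2*g \<Longrightarrow> V c 0 = V 0 c"
    "\<And>c. 2 \<le> c \<Longrightarrow> c < 2*g \<Longrightarrow> V c 1 = V 1 c"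
    "\<And>i j. \<not> (i < 2*g \<and> j < 2*g) \<Longrightarrow> V i j = 0"
proof -
  have S: "\<And>i j. i<2*g \<Longrightarrow> j<2*g \<Longrightarrow> V i j - V j i = Jmat g i j"
    using assms(1) by (simp add: seifert_matrix_def)
  show "V 1 0 = V 0 1 + 1" using S[of 1 0] assms(2) by (simp add: Jmat_def)
  show "V c 0 = V 0 c" if "2 \<le> c" "c < 2*g" for c using S[of c 0] that by (auto simp: Jmat_def)
  show "V c 1 = V 1 c" if "2 \<le> c" "c < 2*g" for c using S[of c 1] that by (cases "c = 2") (auto simp: Jmat_def)
  show "V i j = 0" if "\<not> (i < 2*g \<and> j < 2*g)" for i j
    using assms(1) that by (simp add: seifert_matrix_def supported_def)
qed

definition B1 :: "rat \<Rightarrow> nat \<Rightarrow> nat \<Rightarrow> rat" where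
  "B1 n i j = (if i=0 \<and> j=1 then n else if i=0 \<and> j=3 then -1 else if i=1 \<and> j=2 then 1
     else if i=2 \<and> j=0 then 1 else if i=2 \<and> j=2 then n else if i=3 \<and> j=1 then 1 else 0)"

lemma case1:
  assumes g: "1 \<le> g" and n: "n \<noteq> 0" and sV: "seifert_matrix g V"
    and WD: "W = mmul (2*g) (mmul (2*g) (Delta g n) V) (Delta g n)"
  shows "mmul (2*g+2) (mmul (2*g+2) (blkP g (B1 n)) (col_enl g V (V 1 1/n^2) (\<lambda>j. V 1 j/n)))
     (mtrans (blkP g (B1 n))) = row_enl g W (W 0 0/n^2) (\<lambda>j. W j 0/n)"
proof (rule conj_eq[OF g])
  note s = seif[OF sV g]
  have g2: "1 < 2*g" "0 < 2*g" "3 < 2*g+2" using g by auto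
  note W = Wdelta[OF WD]
  show "\<forall>i<4. \<forall>j<4. (\<Sum>l<4. (\<Sum>k<4. B1 n i k * col_enl g V (V 1 1 / n\<^sup>2) (\<lambda>j. V 1 j / n) k l) * B1 n j l) =
        row_enl g W (W 0 0 / n\<^sup>2) (\<lambda>j. W j 0 / n) i j"
    unfolding all4 sum4 using g2 s(1) n
    by (simp add: B1_def col_enl_def row_enl_def W dd_def field_simps power2_eq_square)
  show "\<forall>i<4. \<forall>c. 2 \<le> c \<longrightarrow> c < 2 * g \<longrightarrow>
        (\<Sum>k<4. B1 n i k * col_enl g V (V 1 1 / n\<^sup>2) (\<lambda>j. V 1 j / n) k (c + 2)) =
        row_enl g W (W 0 0 / n\<^sup>2) (\<lambda>j. W j 0 / n) i (c + 2)"
    unfolding all4 sum4 using g2 s(2,3) n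
    by (simp add: B1_def col_enl_def row_enl_def W dd_def field_simps)
  show "\<forall>c. 2 \<le> c \<longrightarrow> c < 2 * g \<longrightarrow> (\<forall>j<4.
        (\<Sum>k<4. col_enl g V (V 1 1 / n\<^sup>2) (\<lambda>j. V 1 j / n) (c + 2) k * B1 n j k) =
        row_enl g W (W 0 0 / n\<^sup>2) (\<lambda>j. W j 0 / n) (c + 2) j)"
    unfolding all4 sum4 using g2 s(2,3) n
    by (simp add: B1_def col_enl_def row_enl_def W dd_def field_simps)
  show "\<forall>c d. 2 \<le> c \<longrightarrow> c < 2 * g \<longrightarrow> 2 \<le> d \<longrightarrow> d < 2 * g \<longrightarrow>
        col_enl g V (V 1 1 / n\<^sup>2) (\<lambda>j. V 1 j / n) (c + 2) (d + 2) =
        row_enl g W (W 0 0 / n\<^sup>2) (\<lambda>j. W j 0 / n) (c + 2) (d + 2)"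
    by (simp add: col_enl_def row_enl_def W dd_def)
  show "\<forall>i j. \<not> (i < 2 * g + 2 \<and> j < 2 * g + 2) \<longrightarrow> row_enl g W (W 0 0 / n\<^sup>2) (\<lambda>j. W j 0 / n) i j = 0"
    by (simp add: row_enl_def)
qed

definition B2 :: "rat \<Rightarrow> nat \<Rightarrow> nat \<Rightarrow> rat" where
  "B2 N i j = (if i=0 \<and> j=1 then N else if i=0 \<and> j=2 then -1 else if i=1 \<and> j=3 then -1
     else if i=2 \<and> j=1 then 1 else if i=3 \<and> j=0 then -1 else if i=3 \<and> j=3 then N else 0)"

lemma case2:
  assumes g: "1 \<le> g" and n: "n * N = 1" and sV: "seifert_matrix g V"
    and WD: "W = mmul (2*g) (mmul (2*g) (Delta g n) V) (Delta g n)"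
  shows "mmul (2*g+2) (mmul (2*g+2) (blkP g (B2 N)) (col_enl g V (n^2 * V 0 0) (\<lambda>j. n * V 0 j)))
     (mtrans (blkP g (B2 N))) = row_enl g W (n^2 * W 1 1) (\<lambda>j. - (n * W j 1))"
proof (rule conj_eq[OF g])
  note s = seif[OF sV g]
  have g2: "1 < 2*g" "0 < 2*g" "3 < 2*g+2" using g by auto
  have n0: "n \<noteq> 0" using n by auto
  have N: "N = 1/n" using n n0 by (simp add: field_simps)
  note W = Wdelta[OF WD]
  show "\<forall>i<4. \<forall>j<4. (\<Sum>l<4. (\<Sum>k<4. B2 N i k * col_enl g V (n^2 * V 0 0) (\<lambda>j. n * V 0 j) k l) * B2 N j l) =
        row_enl g W (n^2 * W 1 1) (\<lambda>j. - (n * W j 1)) i j"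
    unfolding all4 sum4 N using g2 s(1) n0
    by (simp add: B2_def col_enl_def row_enl_def W dd_def field_simps power2_eq_square)
  show "\<forall>i<4. \<forall>c. 2 \<le> c \<longrightarrow> c < 2 * g \<longrightarrow>
        (\<Sum>k<4. B2 N i k * col_enl g V (n^2 * V 0 0) (\<lambda>j. n * V 0 j) k (c + 2)) =
        row_enl g W (n^2 * W 1 1) (\<lambda>j. - (n * W j 1)) i (c + 2)"
    unfolding all4 sum4 N using g2 s(2,3) n0
    by (simp add: B2_def col_enl_def row_enl_def W dd_def field_simps)
  show "\<forall>c. 2 \<le> c \<longrightarrow> c < 2 * g \<longrightarrow> (\<forall>j<4.
        (\<Sum>k<4. col_enl g V (n^2 * V 0 0) (\<lambda>j. n * V 0 j) (c + 2) k * B2 N j k) =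
        row_enl g W (n^2 * W 1 1) (\<lambda>j. - (n * W j 1)) (c + 2) j)"
    unfolding all4 sum4 N using g2 s(2,3) n0
    by (simp add: B2_def col_enl_def row_enl_def W dd_def field_simps)
  show "\<forall>c d. 2 \<le> c \<longrightarrow> c < 2 * g \<longrightarrow> 2 \<le> d \<longrightarrow> d < 2 * g \<longrightarrow>
        col_enl g V (n^2 * V 0 0) (\<lambda>j. n * V 0 j) (c + 2) (d + 2) =
        row_enl g W (n^2 * W 1 1) (\<lambda>j. - (n * W j 1)) (c + 2) (d + 2)"
    by (simp add: col_enl_def row_enl_def W dd_def)
  show "\<forall>i j. \<not> (i < 2 * g + 2 \<and> j < 2 * g + 2) \<longrightarrow> row_enl g W (n^2 * W 1 1) (\<lambda>j. - (n * W j 1)) i j = 0"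
    by (simp add: row_enl_def)
qed

lemma Jbig: "2 \<le> c \<Longrightarrow> k < 4 \<Longrightarrow> Jmat (g+1) (c+2) k = 0 \<and> Jmat (g+1) k (c+2) = 0"
  by (cases "c = 2") (auto simp: Jmat_def)

lemma symp1:
  assumes g: "1 \<le> g"
  shows "mmul (2*g+2) (mmul (2*g+2) (blkP g (B1 n)) (Jmat (g+1))) (mtrans (blkP g (B1 n))) = Jmat (g+1)"
proof (rule conj_eq[OF g])
  have g2: "3 < 2*g+2" using g by auto
  show "\<forall>i<4. \<forall>j<4. (\<Sum>l<4. (\<Sum>k<4. B1 n i k * Jmat (g+1) k l) * B1 n j l) = Jmat (g+1) i j"
    unfolding all4 sum4 using g2 by (simp add: B1_def Jmat_def)
  show "\<forall>i<4. \<forall>c. 2 \<le> c \<longrightarrow> c < 2 * g \<longrightarrow>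
        (\<Sum>k<4. B1 n i k * Jmat (g+1) k (c + 2)) = Jmat (g+1) i (c + 2)"
    unfolding all4 sum4 using Jbig by simp
  show "\<forall>c. 2 \<le> c \<longrightarrow> c < 2 * g \<longrightarrow> (\<forall>j<4.
        (\<Sum>k<4. Jmat (g+1) (c + 2) k * B1 n j k) = Jmat (g+1) (c + 2) j)"
    unfolding all4 sum4 using Jbig by simp
  show "\<forall>c d. 2 \<le> c \<longrightarrow> c < 2 * g \<longrightarrow> 2 \<le> d \<longrightarrow> d < 2 * g \<longrightarrow>
        Jmat (g+1) (c + 2) (d + 2) = Jmat (g+1) (c + 2) (d + 2)" by simp
  show "\<forall>i j. \<not> (i < 2 * g + 2 \<and> j < 2 * g + 2) \<longrightarrow> Jmat (g+1) i j = 0"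
    by (simp add: Jmat_def)
qed

lemma symp2:
  assumes g: "1 \<le> g"
  shows "mmul (2*g+2) (mmul (2*g+2) (blkP g (B2 N)) (Jmat (g+1))) (mtrans (blkP g (B2 N))) = Jmat (g+1)"
proof (rule conj_eq[OF g])
  have g2: "3 < 2*g+2" using g by auto
  show "\<forall>i<4. \<forall>j<4. (\<Sum>l<4. (\<Sum>k<4. B2 N i k * Jmat (g+1) k l) * B2 N j l) = Jmat (g+1) i j"
    unfolding all4 sum4 using g2 by (simp add: B2_def Jmat_def)
  show "\<forall>i<4. \<forall>c. 2 \<le> c \<longrightarrow> c < 2 * g \<longrightarrow>
        (\<Sum>k<4. B2 N i k * Jmat (g+1) k (c + 2)) = Jmat (g+1) i (c + 2)"
    unfolding all4 sum4 using Jbig by simp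
  show "\<forall>c. 2 \<le> c \<longrightarrow> c < 2 * g \<longrightarrow> (\<forall>j<4.
        (\<Sum>k<4. Jmat (g+1) (c + 2) k * B2 N j k) = Jmat (g+1) (c + 2) j)"
    unfolding all4 sum4 using Jbig by simp
  show "\<forall>c d. 2 \<le> c \<longrightarrow> c < 2 * g \<longrightarrow> 2 \<le> d \<longrightarrow> d < 2 * g \<longrightarrow>
        Jmat (g+1) (c + 2) (d + 2) = Jmat (g+1) (c + 2) (d + 2)" by simp
  show "\<forall>i j. \<not> (i < 2 * g + 2 \<and> j < 2 * g + 2) \<longrightarrow> Jmat (g+1) i j = 0"
    by (simp add: Jmat_def)
qed

definition phiR :: "(nat \<Rightarrow> rat) \<Rightarrow> gmap" where
  "phiR \<rho> = (\<lambda>i k. if i = 0 then [:-\<rho> k, \<rho> k:] else if i = 1 then 0 else if k + 2 = i then 1 else 0)"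

lemma sum_phi:
  assumes "k < 2*g"
  shows "(\<Sum>i<2*g+2. f i * phiR \<rho> i k) = f 0 * [:-\<rho> k, \<rho> k:] + f (k+2)"
proof -
  have "(\<Sum>i<2*g+2. f i * phiR \<rho> i k) = f 0 * [:-\<rho> k, \<rho> k:] + (\<Sum>i<2*g. f (i+2) * (if k = i then 1 else 0))"
    using sum_split2[of "\<lambda>i. f i * phiR \<rho> i k" "2*g"] by (simp add: phiR_def)
  also have "(\<Sum>i<2*g. f (i+2) * (if k = i then 1 else 0)) = f (k+2)"
    using assms by (simp add: if_distrib sum.delta cong: if_cong)
  finally show ?thesis .
qed

lemma rc_row_enl:
  assumes "k < 2*g"
  shows "rel_coeff (row_enl g W x \<rho>) 0 0 = 0"
    "rel_coeff (row_enl g W x \<rho>) 0 1 = [:0,1:]"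
    "rel_coeff (row_enl g W x \<rho>) 0 (k+2) = 0"
    "rel_coeff (row_enl g W x \<rho>) 1 0 = [:-1:]"
    "rel_coeff (row_enl g W x \<rho>) 1 1 = [:-x,x:]"
    "rel_coeff (row_enl g W x \<rho>) 1 (k+2) = [:-\<rho> k, \<rho> k:]"
    "rel_coeff (row_enl g W x \<rho>) (k+2) 0 = 0"
  using assms by (auto simp: rel_coeff_def row_enl_def)

lemma rc_row_enl2:
  assumes "k < 2*g" "j < 2*g"
  shows "rel_coeff (row_enl g W x \<rho>) (j+2) (k+2) = rel_coeff W j k"
    "rel_coeff (row_enl g W x \<rho>) (j+2) 1 = [:-\<rho> j, \<rho> j:]"
  using assms by (auto simp: rel_coeff_def row_enl_def)

lemma delta_sum:
  assumes "j' < (m::nat)"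
  shows "(\<Sum>x<m. (if x = j' then 1 else 0) * (f x :: rat poly)) = f j'"
proof -
  have "(\<Sum>x<m. (if x = j' then 1 else 0) * f x) = (\<Sum>x<m. if x = j' then f x else 0)"
    by (rule sum.cong) auto
  also have "\<dots> = f j'" using assms by simp
  finally show ?thesis .
qed

lemma well_def_part:
  assumes g: "1 \<le> g"
  shows "well_defined_map (2*g+2) (row_enl g W x \<rho>) (2*g) W (phiR \<rho>)"
  unfolding well_defined_map_def
proof (intro allI impI)
  fix j assume j: "j < 2*g+2"
  let ?W' = "row_enl g W x \<rho>"
  have S: "(\<Sum>i<2*g+2. rel_coeff ?W' j i * phiR \<rho> i k) = rel_coeff ?W' j 0 * [:-\<rho> k, \<rho> k:] + rel_coeff ?W' j (k+2)"
    if "k < 2*g" for k using sum_phi[OF that] .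
  show "mod_eq (2*g) W (\<lambda>k. \<Sum>i<2*g+2. rel_coeff ?W' j i * phiR \<rho> i k) (\<lambda>_. 0)"
  proof (cases "j < 2")
    case True
    then have jj: "j = 0 \<or> j = 1" by auto
    have "rel_coeff ?W' j 0 * [:-\<rho> k, \<rho> k:] + rel_coeff ?W' j (k+2) = 0" if k: "k < 2*g" for k
      using jj
    proof
      assume "j = 0" then show ?thesis using k by (simp add: rel_coeff_def row_enl_def)
    next
      assume "j = 1" then show ?thesis using k by (simp add: rel_coeff_def row_enl_def)
    qed
    then show ?thesis unfolding mod_eq_def
      apply (intro exI[of _ 0] exI[of _ "\<lambda>_. 0"] allI impI)
      apply (subst S, assumption) by simp
  next
    case False
    then obtain j' where j': "j = j'+2" "j' < 2*g" using j by (intro that[of "j-2"]) auto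
    have "rel_coeff ?W' j 0 * [:-\<rho> k, \<rho> k:] + rel_coeff ?W' j (k+2)
          = (\<Sum>x<2*g. (if x = j' then 1 else 0) * rel_coeff W x k)" if k: "k < 2*g" for k
    proof -
      have a: "rel_coeff ?W' j 0 = 0" using j' by (simp add: rel_coeff_def row_enl_def)
      have b: "rel_coeff ?W' j (k+2) = rel_coeff W j' k" using j' k by (simp add: rel_coeff_def row_enl_def)
      show ?thesis unfolding a b delta_sum[OF j'(2)] by simp
    qed
    then show ?thesis unfolding mod_eq_def
      apply (intro exI[of _ 0] exI[of _ "\<lambda>x. if x = j' then 1 else 0"] allI impI)
      apply (subst S, assumption) by simp
  qed
qed

lemma map_eq1_part:
  "map_eq (2*g) (2*g) W (comp_map (2*g+2) (phiR \<rho>) enl_map) id_map"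
  unfolding map_eq_def mod_eq_def
proof (intro allI impI)
  fix i assume i: "i < 2*g"
  have "comp_map (2*g+2) (phiR \<rho>) enl_map i k = id_map i k" for k
  proof -
    have "comp_map (2*g+2) (phiR \<rho>) enl_map i k = (\<Sum>j<2*g+2. if j = i+2 then phiR \<rho> j k else 0)"
      unfolding comp_map_def enl_map_def by (rule sum.cong) auto
    also have "\<dots> = phiR \<rho> (i+2) k" using i by (simp add: sum.delta)
    finally show ?thesis by (auto simp: phiR_def id_map_def)
  qed
  then show "\<exists>N c. \<forall>ia<2 * g. monom 1 N * (comp_map (2 * g + 2) (phiR \<rho>) enl_map i ia - id_map i ia) =
                   (\<Sum>j<2 * g. c j * rel_coeff W j ia)"
    by (intro exI[of _ 0] exI[of _ "\<lambda>_. 0"]) simp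
qed

lemma comp2:
  "comp_map (2*g) enl_map \<phi> i k = (if 2 \<le> k \<and> k < 2*g+2 then \<phi> i (k-2) else 0)"
proof -
  have "comp_map (2*g) enl_map \<phi> i k = (\<Sum>j<2*g. if j = k-2 then (if 2 \<le> k then \<phi> i j else 0) else 0)"
    unfolding comp_map_def enl_map_def by (rule sum.cong) auto
  also have "\<dots> = (if 2 \<le> k \<and> k < 2*g+2 then \<phi> i (k-2) else 0)"
    by (auto simp: sum.delta)
  finally show ?thesis .
qed

lemma m1: "[:-1::rat:] = -1" by (simp add: one_pCons)

lemma map_eq2_part:
  assumes g: "1 \<le> g"
  shows "map_eq (2*g+2) (2*g+2) (row_enl g W x \<rho>) (comp_map (2*g) enl_map (phiR \<rho>)) id_map"
  unfolding map_eq_def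
proof (intro allI impI)
  fix i assume i: "i < 2*g+2"
  let ?W' = "row_enl g W x \<rho>"
  have SS: "(\<Sum>j<2*g+2. c j * rel_coeff ?W' j k) = c 0 * rel_coeff ?W' 0 k + c 1 * rel_coeff ?W' 1 k"
    if "\<forall>j\<ge>2. c j = 0" for c k
    using sum_split2[of "\<lambda>j. c j * rel_coeff ?W' j k" "2*g"] that by simp
  have r00: "rel_coeff ?W' 0 0 = 0" and r01: "rel_coeff ?W' 0 1 = [:0,1:]"
    and r10: "rel_coeff ?W' 1 0 = -1" and r11: "rel_coeff ?W' 1 1 = [:-x,x:]"
    using g by (simp_all add: rel_coeff_def row_enl_def m1)
  have r0k: "rel_coeff ?W' 0 (k'+2) = 0" and r1k: "rel_coeff ?W' 1 (k'+2) = [:-\<rho> k', \<rho> k':]"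
    if "k' < 2*g" for k' using that by (simp_all add: rel_coeff_def row_enl_def)
  have kc: "k = 0 \<or> k = 1 \<or> (\<exists>k'. k = k'+2 \<and> k' < 2*g)" if "k < 2*g+2" for k
    using that by (cases k; cases "k-1") auto
  show "mod_eq (2*g+2) ?W' (comp_map (2*g) enl_map (phiR \<rho>) i) (id_map i)"
  proof (cases "i < 2")
    case True
    then have "i = 0 \<or> i = 1" by auto
    then show ?thesis
    proof
      assume i0: "i = 0"
      show ?thesis unfolding mod_eq_def
      proof (intro exI[of _ 1] exI[of _ "\<lambda>j. if j = 0 then - [:-x,x:] else if j = 1 then [:0,1:] else 0"] allI impI)
        fix k assume k: "k < 2*g+2"
        have R: "(\<Sum>j<2*g+2. (if j = 0 then - [:-x,x:] else if j = 1 then [:0,1:] else 0) * rel_coeff ?W' j k)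
           = - [:-x,x:] * rel_coeff ?W' 0 k + [:0,1:] * rel_coeff ?W' 1 k"
          using SS[of "\<lambda>j. if j = 0 then - [:-x,x:] else if j = 1 then [:0,1:] else 0" k]
          by (simp del: sum.lessThan_Suc)
        show "monom 1 1 * (comp_map (2*g) enl_map (phiR \<rho>) i k - id_map i k) =
          (\<Sum>j<2*g+2. (if j = 0 then - [:-x,x:] else if j = 1 then [:0,1:] else 0) * rel_coeff ?W' j k)"
          using kc[OF k]
        proof (elim disjE exE conjE)
          assume k0: "k = 0" show ?thesis unfolding R unfolding k0 r00 r10 by (simp add: i0 comp2 phiR_def id_map_def monom_Suc) (simp add: m1)

        next
          assume k0: "k = 1" show ?thesis unfolding R unfolding k0 r01 r11 by (simp add: i0 comp2 phiR_def id_map_def monom_Suc)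
        next
          fix k' assume k0: "k = k'+2" "k' < 2*g" show ?thesis unfolding R unfolding k0(1) r0k[OF k0(2)] r1k[OF k0(2)] using k0(2) by (simp add: i0 comp2 phiR_def id_map_def monom_Suc)
        qed
      qed
    next
      assume i1: "i = 1"
      show ?thesis unfolding mod_eq_def
      proof (intro exI[of _ 1] exI[of _ "\<lambda>j. if j = 0 then -1 else 0"] allI impI)
        fix k assume k: "k < 2*g+2"
        have R: "(\<Sum>j<2*g+2. (if j = 0 then -1 else 0) * rel_coeff ?W' j k)
           = - rel_coeff ?W' 0 k"
          using SS[of "\<lambda>j. if j = 0 then -1 else 0" k]
          by (simp del: sum.lessThan_Suc)
        show "monom 1 1 * (comp_map (2*g) enl_map (phiR \<rho>) i k - id_map i k) =
          (\<Sum>j<2*g+2. (if j = 0 then -1 else 0) * rel_coeff ?W' j k)"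
          using kc[OF k]
        proof (elim disjE exE conjE)
          assume k0: "k = 0" show ?thesis unfolding R unfolding k0 r00 by (simp add: i1 comp2 phiR_def id_map_def monom_Suc)
        next
          assume k0: "k = 1" show ?thesis unfolding R unfolding k0 r01 by (simp add: i1 comp2 phiR_def id_map_def monom_Suc) (simp add: m1)
        next
          fix k' assume k0: "k = k'+2" "k' < 2*g" show ?thesis unfolding R unfolding k0(1) r0k[OF k0(2)] by (simp add: i1 comp2 phiR_def id_map_def monom_Suc)
        qed
      qed
    qed
  next
    case False
    show ?thesis unfolding mod_eq_def
      by (intro exI[of _ 0] exI[of _ "\<lambda>_. 0"] allI impI)
        (use False in \<open>auto simp: comp2 phiR_def id_map_def\<close>)
  qed
qed

lemma xi_formula:
  assumes i: "i < 2*g" and k: "k < 2*g"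
  shows "comp_map (2*g+2) (phiR \<rho>) (comp_map (2*g+2) (cong_map (2*g+2) P) enl_map) i k
     = [:P 0 (i+2):] * [:-\<rho> k, \<rho> k:] + [:P (k+2) (i+2):]"
proof -
  have inner: "comp_map (2*g+2) (cong_map (2*g+2) P) enl_map i j = [:P j (i+2):]" if j: "j < 2*g+2" for j
  proof -
    have "comp_map (2*g+2) (cong_map (2*g+2) P) enl_map i j
        = (\<Sum>j'<2*g+2. if j' = i+2 then cong_map (2*g+2) P j' j else 0)"
      unfolding comp_map_def enl_map_def by (rule sum.cong) auto
    also have "\<dots> = cong_map (2*g+2) P (i+2) j" using i by simp
    finally show ?thesis using j by (simp add: cong_map_def)
  qed
  have "comp_map (2*g+2) (phiR \<rho>) (comp_map (2*g+2) (cong_map (2*g+2) P) enl_map) i k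
      = (\<Sum>j<2*g+2. [:P j (i+2):] * phiR \<rho> j k)"
    unfolding comp_map_def[of "2*g+2" "phiR \<rho>"] by (rule sum.cong[OF refl]) (metis inner lessThan_iff)
  also have "\<dots> = [:P 0 (i+2):] * [:-\<rho> k, \<rho> k:] + [:P (k+2) (i+2):]"
    using sum_phi[OF k, of "\<lambda>j. [:P j (i+2):]" \<rho>] by simp
  finally show ?thesis .
qed

lemma seifJ:
  assumes "seifert_matrix g W" "k < 2*g" "1 \<le> g"
  shows "W k 0 - W 0 k = (if k = 1 then 1 else 0)" "W k 1 - W 1 k = (if k = 0 then -1 else 0)"
proof -
  have S: "\<And>i j. i<2*g \<Longrightarrow> j<2*g \<Longrightarrow> W i j - W j i = Jmat g i j"
    using assms(1) by (simp add: seifert_matrix_def)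
  show "W k 0 - W 0 k = (if k = 1 then 1 else 0)" using S[of k 0] assms(2,3) by (auto simp: Jmat_def)
  show "W k 1 - W 1 k = (if k = 0 then -1 else 0)" using S[of k 1] assms(2,3)
    by (cases "k = 2") (auto simp: Jmat_def)
qed

lemma sum_c0:
  assumes "j0 < (m::nat)"
  shows "(\<Sum>j<m. (if j = j0 then a else 0) * (f j :: rat poly)) = a * f j0"
proof -
  have "(\<Sum>j<m. (if j = j0 then a else 0) * f j) = (\<Sum>j<m. if j = j0 then a * f j else 0)"
    by (rule sum.cong) auto
  also have "\<dots> = a * f j0" using assms by simp
  finally show ?thesis .
qed

lemma tau1:
  assumes g: "1 \<le> g" and n: "n \<noteq> 0" and sW: "seifert_matrix g W"
  shows "same_tau_class (2*g) (2*g) W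
       (comp_map (2*g+2) (phiR (\<lambda>j. W j 0 / n)) (comp_map (2*g+2) (cong_map (2*g+2) (blkP g (B1 n))) enl_map))
       (cong_map (2*g) (Delta g n))"
  unfolding same_tau_class_def
proof (intro exI[of _ 0] allI impI)
  fix i assume i: "i < 2*g"
  let ?P = "blkP g (B1 n)"
  have g2: "1 < 2*g" using g by auto
  have X: "comp_map (2*g+2) (phiR (\<lambda>j. W j 0 / n)) (comp_map (2*g+2) (cong_map (2*g+2) ?P) enl_map) i k
     = [:?P 0 (i+2):] * [:-(W k 0 / n), W k 0 / n:] + [:?P (k+2) (i+2):]" if "k < 2*g" for k
    using xi_formula[OF i that] .
  have E: "cong_map (2*g) (Delta g n) i k = [:Delta g n k i:]" if "k < 2*g" for k
    using that by (simp add: cong_map_def)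
  show "mod_eq (2*g) W (\<lambda>k. monom 1 0 * comp_map (2*g+2) (phiR (\<lambda>j. W j 0 / n)) (comp_map (2*g+2) (cong_map (2*g+2) ?P) enl_map) i k)
      (\<lambda>k. monom 1 0 * cong_map (2*g) (Delta g n) i k)"
  proof (cases "i = 1")
    case True
    show ?thesis unfolding mod_eq_def
    proof (intro exI[of _ 0] exI[of _ "\<lambda>j. if j = 0 then [:-1/n:] else 0"] allI impI)
      fix k assume k: "k < 2*g"
      have J: "W k 0 - W 0 k = (if k = 1 then 1 else 0)" using seifJ[OF sW k g] by simp
      show "monom 1 0 * (monom 1 0 * comp_map (2*g+2) (phiR (\<lambda>j. W j 0 / n)) (comp_map (2*g+2) (cong_map (2*g+2) ?P) enl_map) i k
           - monom 1 0 * cong_map (2*g) (Delta g n) i k) = (\<Sum>j<2*g. (if j = 0 then [:-1/n:] else 0) * rel_coeff W j k)"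
        unfolding X[OF k] E[OF k] sum_c0[OF g2[THEN less_trans[OF zero_less_one]]]
        using J n True g2 by (cases "k = 1") (auto simp: blkP_def B1_def Delta_def rel_coeff_def field_simps)
    qed
  next
    case False
    show ?thesis unfolding mod_eq_def
    proof (intro exI[of _ 0] exI[of _ "\<lambda>j. 0"] allI impI)
      fix k assume k: "k < 2*g"
      show "monom 1 0 * (monom 1 0 * comp_map (2*g+2) (phiR (\<lambda>j. W j 0 / n)) (comp_map (2*g+2) (cong_map (2*g+2) ?P) enl_map) i k
           - monom 1 0 * cong_map (2*g) (Delta g n) i k) = (\<Sum>j<2*g. 0 * rel_coeff W j k)"
        unfolding X[OF k] E[OF k] using False i k by (auto simp: blkP_def B1_def Delta_def)
    qed
  qed
qed

lemma tau2:
  assumes g: "1 \<le> g" and n: "n * N = 1" and sW: "seifert_matrix g W"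
  shows "same_tau_class (2*g) (2*g) W
       (comp_map (2*g+2) (phiR (\<lambda>j. - (n * W j 1))) (comp_map (2*g+2) (cong_map (2*g+2) (blkP g (B2 N))) enl_map))
       (cong_map (2*g) (Delta g n))"
  unfolding same_tau_class_def
proof (intro exI[of _ 0] allI impI)
  fix i assume i: "i < 2*g"
  let ?P = "blkP g (B2 N)"
  have g2: "1 < 2*g" using g by auto
  have n0: "n \<noteq> 0" using n by auto
  have N: "N = 1/n" using n n0 by (simp add: field_simps)
  have X: "comp_map (2*g+2) (phiR (\<lambda>j. - (n * W j 1))) (comp_map (2*g+2) (cong_map (2*g+2) ?P) enl_map) i k
     = [:?P 0 (i+2):] * [:-(- (n * W k 1)), - (n * W k 1):] + [:?P (k+2) (i+2):]" if "k < 2*g" for k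
    using xi_formula[OF i that] .
  have E: "cong_map (2*g) (Delta g n) i k = [:Delta g n k i:]" if "k < 2*g" for k
    using that by (simp add: cong_map_def)
  show "mod_eq (2*g) W (\<lambda>k. monom 1 0 * comp_map (2*g+2) (phiR (\<lambda>j. - (n * W j 1))) (comp_map (2*g+2) (cong_map (2*g+2) ?P) enl_map) i k)
      (\<lambda>k. monom 1 0 * cong_map (2*g) (Delta g n) i k)"
  proof (cases "i = 0")
    case True
    show ?thesis unfolding mod_eq_def
    proof (intro exI[of _ 0] exI[of _ "\<lambda>j. if j = 1 then [:n:] else 0"] allI impI)
      fix k assume k: "k < 2*g"
      have J: "W 1 k = W k 1 + (if k = 0 then 1 else 0)" using seifJ[OF sW k g] by (simp add: algebra_simps)
      show "monom 1 0 * (monom 1 0 * comp_map (2*g+2) (phiR (\<lambda>j. - (n * W j 1))) (comp_map (2*g+2) (cong_map (2*g+2) ?P) enl_map) i k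
           - monom 1 0 * cong_map (2*g) (Delta g n) i k) = (\<Sum>j<2*g. (if j = 1 then [:n:] else 0) * rel_coeff W j k)"
        unfolding X[OF k] E[OF k] sum_c0[OF g2]
        using J n0 True g2 by (cases "k = 0") (auto simp: blkP_def B2_def Delta_def rel_coeff_def field_simps)
    qed
  next
    case False
    show ?thesis unfolding mod_eq_def
    proof (intro exI[of _ 0] exI[of _ "\<lambda>j. 0"] allI impI)
      fix k assume k: "k < 2*g"
      show "monom 1 0 * (monom 1 0 * comp_map (2*g+2) (phiR (\<lambda>j. - (n * W j 1))) (comp_map (2*g+2) (cong_map (2*g+2) ?P) enl_map) i k
           - monom 1 0 * cong_map (2*g) (Delta g n) i k) = (\<Sum>j<2*g. 0 * rel_coeff W j k)"
        unfolding X[OF k] E[OF k] using False i k n0 by (auto simp: blkP_def B2_def Delta_def N)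
    qed
  qed
qed

lemma blk_isymp:
  assumes g: "1 \<le> g" and Z: "\<forall>i j. B i j \<in> \<int>"
    and S: "mmul (2*g+2) (mmul (2*g+2) (blkP g B) (Jmat (g+1))) (mtrans (blkP g B)) = Jmat (g+1)"
  shows "integral_symplectic (g+1) (blkP g B)"
proof -
  have e: "2*(g+1) = 2*g+2" by simp
  have "supported (2*g+2) (blkP g B)" using g by (auto simp: supported_def blkP_def)
  moreover have "\<forall>i j. blkP g B i j \<in> \<int>" using Z by (simp add: blkP_def)
  ultimately show ?thesis unfolding integral_symplectic_def e using S by simp
qed

theorem mainTheorem14:
  fixes g :: nat and n :: rat and V W :: qmat
  assumes "g \<ge> 1"
    and "\<exists>N::nat. N > 0 \<and> (n = of_nat N \<or> n = 1 / of_nat N)"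
    and "seifert_matrix g V" and "seifert_matrix g W"
    and "W = mmul (2*g) (mmul (2*g) (Delta g n) V) (Delta g n)"
  shows "\<exists>V' W' P \<phi>.
     is_enlargement g V V' \<and> is_enlargement g W W' \<and>
     integral_symplectic (g+1) P \<and>
     W' = mmul (2*g+2) (mmul (2*g+2) P V') (mtrans P) \<and>
     well_defined_map (2*g+2) W' (2*g) W \<phi> \<and>
     map_eq (2*g) (2*g) W (comp_map (2*g+2) \<phi> enl_map) id_map \<and>
     map_eq (2*g+2) (2*g+2) W' (comp_map (2*g) enl_map \<phi>) id_map \<and>
     same_tau_class (2*g) (2*g) W
       (comp_map (2*g+2) \<phi> (comp_map (2*g+2) (cong_map (2*g+2) P) enl_map))
       (cong_map (2*g) (Delta g n))"
proof -
  note g = assms(1)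
  obtain N :: nat where N: "N > 0" "n = of_nat N \<or> n = 1 / of_nat N" using assms(2) by blast
  from N(2) show ?thesis
  proof
    assume nN: "n = of_nat N"
    have n0: "n \<noteq> 0" using nN N(1) by simp
    let ?V' = "col_enl g V (V 1 1/n^2) (\<lambda>j. V 1 j/n)"
    let ?W' = "row_enl g W (W 0 0/n^2) (\<lambda>j. W j 0/n)"
    let ?P = "blkP g (B1 n)"
    let ?\<phi> = "phiR (\<lambda>j. W j 0/n)"
    have Z: "\<forall>i j. B1 n i j \<in> \<int>" using nN by (simp add: B1_def)
    show ?thesis
      apply (rule exI[of _ ?V'], rule exI[of _ ?W'], rule exI[of _ ?P], rule exI[of _ ?\<phi>])
      using case1[OF g n0 assms(3,5)] blk_isymp[OF g Z symp1[OF g]] well_def_part[OF g]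
        map_eq1_part map_eq2_part[OF g] tau1[OF g n0 assms(4)]
      by (auto simp: is_enlargement_def)
  next
    assume nN: "n = 1 / of_nat N"
    let ?M = "of_nat N :: rat"
    have nM: "n * ?M = 1" using nN N(1) by simp
    let ?V' = "col_enl g V (n^2 * V 0 0) (\<lambda>j. n * V 0 j)"
    let ?W' = "row_enl g W (n^2 * W 1 1) (\<lambda>j. - (n * W j 1))"
    let ?P = "blkP g (B2 ?M)"
    let ?\<phi> = "phiR (\<lambda>j. - (n * W j 1))"
    have Z: "\<forall>i j. B2 ?M i j \<in> \<int>" by (simp add: B2_def)
    show ?thesis
      apply (rule exI[of _ ?V'], rule exI[of _ ?W'], rule exI[of _ ?P], rule exI[of _ ?\<phi>])
      using case2[OF g nM assms(3,5)] blk_isymp[OF g Z symp2[OF g]] well_def_part[OF g]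
        map_eq1_part map_eq2_part[OF g] tau2[OF g nM assms(4)]
      by (auto simp: is_enlargement_def)
  qed
qed

end
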